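(* Suppose $\{L_t : t\in[0,1]\}$ is a continuous family of oriented lines in $\mathbb{R}^3$ such that $L_1$ is the line $L_0$ with the opposite orientation. Then there exist parameters $r,s\in[0,1]$ such that $L_r$ and $L_s$ are perpendicular, intersecting lines.
   Context: An oriented line in $\mathbb{R}^3$ is a line together with a choice of one of its two unit direction vectors. Continuity of the family is understood in the space of oriented lines, e.g. via the direction vector $a_t$ and the moment vector $p_t\times a_t$ for any point $p_t\in L_t$ varying continuously in $t$. *)

theory Defs
  imports "HOL-Analysis.Analysis"
begin

text \<open>An oriented line in R^3 is represented by its Pluecker coordinates (a, m):
  a unit direction vector a and a moment vector m = p x a (p any point of the line),
  so that m is orthogonal to a.\<close>

definition oriented_line :: "real^3 \<Rightarrow> real^3 \<Rightarrow> bool" where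
  "oriented_line a m \<longleftrightarrow> norm a = 1 \<and> a \<bullet> m = 0"

definition line_points :: "real^3 \<Rightarrow> real^3 \<Rightarrow> (real^3) set" where
  "line_points a m = {p. cross3 p a = m}"

end

theory Submission imports Defs begin
lemma cross_cross_left: "cross3 (cross3 x y) z = (x \<bullet> z) *\<^sub>R y - (y \<bullet> z) *\<^sub>R x"
  by (simp add: cross3_simps forall_3)

lemma geo:
  fixes a b m n :: "real^3"
  assumes "norm a = 1" "norm b = 1" "a \<bullet> b = 0" "a \<bullet> m = 0" "b \<bullet> n = 0" "a \<bullet> n + b \<bullet> m = 0"
  shows "cross3 (cross3 a m + (n \<bullet> cross3 a b) *\<^sub>R a) a = m \<and> cross3 (cross3 a m + (n \<bullet> cross3 a b) *\<^sub>R a) b = n"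
proof -
  have aa: "a \<bullet> a = 1" using assms(1) by (simp add: dot_square_norm)
  have bb: "b \<bullet> b = 1" using assms(2) by (simp add: dot_square_norm)
  define c where "c = cross3 a b"
  have cc: "c \<bullet> c = 1" using norm_cross_dot[of a b] assms(1-3) unfolding c_def
    by (simp add: dot_square_norm)
  have ca: "c \<bullet> a = 0" "c \<bullet> b = 0" unfolding c_def by (simp_all add: dot_cross_self inner_commute)
  define x where "x = n - (n \<bullet> a) *\<^sub>R a - (n \<bullet> c) *\<^sub>R c"
  have xa: "a \<bullet> x = 0" using aa ca unfolding x_def by (simp add: inner_diff_right inner_commute)
  have xb: "b \<bullet> x = 0" using assms(3,5) ca unfolding x_def by (simp add: inner_diff_right inner_commute)
  have xc: "c \<bullet> x = 0" using cc ca unfolding x_def by (simp add: inner_diff_right inner_commute)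
  have "cross3 c x = 0" unfolding c_def cross_cross_left using xa xb by (simp add: inner_commute)
  hence "(norm c * norm x)\<^sup>2 = 0" using norm_cross_dot[of c x] xc by simp
  moreover have "norm c = 1" using cc by (metis norm_eq_sqrt_inner real_sqrt_one)
  ultimately have "x = 0" by simp
  hence n: "n = (n \<bullet> a) *\<^sub>R a + (n \<bullet> c) *\<^sub>R c" unfolding x_def by (simp add: algebra_simps)
  have 1: "cross3 (cross3 a m + (n \<bullet> cross3 a b) *\<^sub>R a) a = m"
    by (simp add: cross_add_left cross_mult_left cross_cross_left aa assms(4) inner_commute)
  have "cross3 (cross3 a m + (n \<bullet> cross3 a b) *\<^sub>R a) b = - (m \<bullet> b) *\<^sub>R a + (n \<bullet> c) *\<^sub>R c"
    by (simp add: cross_add_left cross_mult_left cross_cross_left assms(3) c_def)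
  also have "\<dots> = (n \<bullet> a) *\<^sub>R a + (n \<bullet> c) *\<^sub>R c"
  proof -
    have "n \<bullet> a = - (m \<bullet> b)" using assms(6) by (simp add: inner_commute add_eq_0_iff)
    thus ?thesis by simp
  qed
  also have "\<dots> = n" using n by simp
  finally show ?thesis using 1 by simp
qed

lemma int_valued_const:
  fixes f :: "'a::topological_space \<Rightarrow> real"
  assumes "connected S" "continuous_on S f" "\<And>x. x \<in> S \<Longrightarrow> f x \<in> \<int>" "x \<in> S" "y \<in> S"
  shows "f x = f y"
proof -
  have "f constant_on S"
  proof (rule continuous_discrete_range_constant[OF assms(1,2)])
    fix x assume x: "x \<in> S"
    show "\<exists>e>0. \<forall>y. y \<in> S \<and> f y \<noteq> f x \<longrightarrow> e \<le> norm (f y - f x)"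
    proof (intro exI[of _ 1] conjI allI impI)
      fix y assume y: "y \<in> S \<and> f y \<noteq> f x"
      have "f y - f x \<in> \<int>" using assms(3) x y by auto
      thus "1 \<le> norm (f y - f x)" using y Ints_nonzero_abs_ge1 by force
    qed simp
  qed
  thus ?thesis using assms(4,5) unfolding constant_on_def by auto
qed

theorem lemma3p1:
  fixes a m :: "real \<Rightarrow> real^3"
  assumes lines: "\<And>t. t \<in> {0..1} \<Longrightarrow> oriented_line (a t) (m t)"
    and cont_a: "continuous_on {0..1} a"
    and cont_m: "continuous_on {0..1} m"
    and same_line: "line_points (a 1) (m 1) = line_points (a 0) (m 0)"
    and opposite: "a 1 = - a 0"
  shows "\<exists>r\<in>{0..1}. \<exists>s\<in>{0..1}. a r \<bullet> a s = 0 \<and>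
           line_points (a r) (m r) \<inter> line_points (a s) (m s) \<noteq> {}"
proof (rule ccontr)
  assume neg: "\<not> ?thesis"
  have un: "norm (a t) = 1" "a t \<bullet> m t = 0" if "t \<in> {0..1}" for t
    using lines[OF that] unfolding oriented_line_def by auto
  have aa: "a t \<bullet> a t = 1" if "t \<in> {0..1}" for t
    using un[OF that] by (simp add: dot_square_norm)
  have m1: "m 1 = - m 0"
  proof -
    define p where "p = cross3 (a 0) (m 0)"
    have "cross3 p (a 0) = m 0" unfolding p_def cross_cross_left
      using aa[of 0] un[of 0] by (simp add: inner_commute)
    hence "p \<in> line_points (a 1) (m 1)" using same_line unfolding line_points_def by auto
    hence "m 1 = cross3 p (a 1)" unfolding line_points_def by auto
    also have "\<dots> = - m 0" using opposite \<open>cross3 p (a 0) = m 0\<close> by simp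
    finally show ?thesis .
  qed
  define S :: "(real \<times> real) set" where "S = {0..1} \<times> {0..1}"
  define F where "F z = complex_of_real (a (fst z) \<bullet> a (snd z)) + \<i> * complex_of_real (a (fst z) \<bullet> m (snd z) + a (snd z) \<bullet> m (fst z))" for z
  have Fnz: "F z \<noteq> 0" if "z \<in> S" for z
  proof
    assume "F z = 0"
    hence h1: "a (fst z) \<bullet> a (snd z) = 0" and h2: "a (fst z) \<bullet> m (snd z) + a (snd z) \<bullet> m (fst z) = 0"
      unfolding F_def by (simp_all add: complex_eq_iff)
    have r: "fst z \<in> {0..1}" and s: "snd z \<in> {0..1}" using that unfolding S_def by auto
    have "line_points (a (fst z)) (m (fst z)) \<inter> line_points (a (snd z)) (m (snd z)) \<noteq> {}"
      using geo[OF un(1)[OF r] un(1)[OF s] h1 un(2)[OF r] un(2)[OF s] h2]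
      unfolding line_points_def by blast
    thus False using neg r s h1 by blast
  qed
  have cS: "convex S" unfolding S_def by (intro convex_Times convex_real_interval)
  have ca1: "continuous_on S (\<lambda>z. a (fst z))"
    by (rule continuous_on_compose2[OF cont_a continuous_on_fst[OF continuous_on_id]]) (auto simp: S_def)
  have ca2: "continuous_on S (\<lambda>z. a (snd z))"
    by (rule continuous_on_compose2[OF cont_a continuous_on_snd[OF continuous_on_id]]) (auto simp: S_def)
  have cm1: "continuous_on S (\<lambda>z. m (fst z))"
    by (rule continuous_on_compose2[OF cont_m continuous_on_fst[OF continuous_on_id]]) (auto simp: S_def)
  have cm2: "continuous_on S (\<lambda>z. m (snd z))"
    by (rule continuous_on_compose2[OF cont_m continuous_on_snd[OF continuous_on_id]]) (auto simp: S_def)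
  have cF: "continuous_on S F" unfolding F_def
    by (intro continuous_intros ca1 ca2 cm1 cm2)
  obtain g where cg: "continuous_on S g" and g: "\<And>z. z \<in> S \<Longrightarrow> F z = exp (g z)"
    using continuous_logarithm_on_simply_connected[OF cF convex_imp_simply_connected[OF cS]
        convex_imp_locally_path_connected[OF cS] Fnz] by metis
  define E where "E t = Im (g (t, t)) / (2 * pi)" for t
  have Eint: "E t \<in> \<int>" if "t \<in> {0..1}" for t
  proof -
    have "(t, t) \<in> S" using that unfolding S_def by auto
    have "F (t, t) = 1" unfolding F_def using aa[OF that] un(2)[OF that] by simp
    hence "exp (g (t, t)) = 1" using g[OF \<open>(t, t) \<in> S\<close>] by simp
    then obtain n :: int where "Im (g (t, t)) = of_int (2 * n) * pi" unfolding exp_eq_1 by blast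
    hence "E t = of_int n" unfolding E_def by simp
    thus ?thesis by simp
  qed
  have cE: "continuous_on {0..1} E" unfolding E_def
    by (intro continuous_intros continuous_on_compose2[OF cg] continuous_on_Pair continuous_on_id)
      (auto simp: S_def)
  have E01: "E 0 = E 1"
    by (rule int_valued_const[OF connected_Icc cE Eint]) auto
  define D where "D t = (Im (g (t, 1)) - Im (g (0, t)) - pi) / (2 * pi)" for t
  have Dint: "D t \<in> \<int>" if "t \<in> {0..1}" for t
  proof -
    have S1: "(t, 1) \<in> S" "(0, t) \<in> S" using that unfolding S_def by auto
    have "F (t, 1) = - F (0, t)" unfolding F_def using opposite m1
      by (simp add: inner_commute algebra_simps)
    hence "exp (g (t, 1)) = exp (g (0, t) + of_real pi * \<i>)"
      using g[OF S1(1)] g[OF S1(2)] by (simp add: exp_add exp_pi_i)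
    then obtain n :: int where "g (t, 1) = g (0, t) + of_real pi * \<i> + (of_int (2 * n) * pi) * \<i>"
      unfolding exp_eq by blast
    hence "Im (g (t, 1)) = Im (g (0, t)) + pi + of_int (2 * n) * pi" by simp
    hence "D t = of_int n" unfolding D_def by (simp add: field_simps)
    thus ?thesis by simp
  qed
  have cD: "continuous_on {0..1} D" unfolding D_def
    by (intro continuous_intros continuous_on_compose2[OF cg] continuous_on_Pair continuous_on_id)
      (auto simp: S_def)
  have D01: "D 0 = D 1"
    by (rule int_valued_const[OF connected_Icc cD Dint]) auto
  obtain k :: int where k: "D 0 = of_int k" using Dint[of 0] by (auto elim: Ints_cases)
  have "Im (g (1, 1)) = Im (g (0, 0))" using E01 unfolding E_def by simp
  moreover have "Im (g (0, 1)) = Im (g (0, 0)) + pi + 2 * pi * k" using k unfolding D_def by (simp add: field_simps)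
  moreover have "Im (g (1, 1)) = Im (g (0, 1)) + pi + 2 * pi * k" using k D01 unfolding D_def by (simp add: field_simps)
  ultimately have "pi * (2 * of_int (2 * k + 1)) = 0" by (simp add: algebra_simps)
  hence "(2 * k + 1) = 0" by simp
  thus False by presburger
qed

end
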